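(* Let $p\ge 1$ and $q\ge 0$ be integers and let $u$ be the unique integer in the interval $[p,p+q]$ maximizing $v_2(u)$. Then $$v_2\Big(\sum_{i=0}^{q}\frac{\binom{q}{i}}{p+i}\Big)=v_2\Big(\frac{\binom{q}{u-p}}{u}\Big).$$
   Context: For a nonzero rational number $x=2^m a/b$ with $a,b$ odd integers, $v_2(x)=m$ is its $2$-adic valuation. *)

theory Defs
  imports Complex_Main "HOL-Computational_Algebra.Computational_Algebra"
begin

text \<open>2-adic valuation of a nonzero rational x = 2^m a/b (a, b odd): v2 x = m.
  Computed from the reduced fraction representation. (Value at 0 is 0 by convention.)\<close>
definition v2 :: "rat \<Rightarrow> int" where
  "v2 x = (let (a, b) = quotient_of x in
             int (multiplicity (2::int) a) - int (multiplicity (2::int) b))"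

end

theory Submission
  imports Defs
begin

abbreviation M :: "int \<Rightarrow> nat" where "M x \<equiv> multiplicity (2::int) x"

lemma p2: "prime_elem (2::int)" by simp

lemma Mmult: "x \<noteq> 0 \<Longrightarrow> y \<noteq> 0 \<Longrightarrow> M (x*y) = M x + M y"
  by (rule prime_elem_multiplicity_mult_distrib[OF p2])

lemma Mult_ultra:
  fixes x y :: int
  assumes "x \<noteq> 0" "M x < M y"
  shows "x + y \<noteq> 0 \<and> M (x + y) = M x"
proof -
  have nu: "\<not> is_unit (2::int)" by simp
  have d1: "2 ^ M x dvd x" by (rule multiplicity_dvd)
  have d2: "2 ^ Suc (M x) dvd y" using assms(2) by (intro multiplicity_dvd') simp
  hence d2': "2 ^ M x dvd y" using dvd_trans[OF le_imp_power_dvd[of "M x" "Suc (M x)"] d2] by simp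
  have n1: "\<not> 2 ^ Suc (M x) dvd x"
    using multiplicity_geI[OF assms(1) nu] by fastforce
  have a: "2 ^ M x dvd x + y" using d1 d2' by simp
  have b: "\<not> 2 ^ Suc (M x) dvd x + y" using d2 n1 by (simp add: dvd_add_left_iff)
  have "x + y \<noteq> 0" using b by auto
  moreover have "M (x+y) = M x" by (rule multiplicity_eqI[OF a b])
  ultimately show ?thesis by simp
qed

lemma rat_repr: "\<exists>a b. b > 0 \<and> x = (of_int a / of_int b :: rat)"
  by (metis prod.exhaust quotient_of_denom_pos quotient_of_div)

lemma v2_frac:
  assumes "a \<noteq> 0" "b \<noteq> 0"
  shows "v2 (of_int a / of_int b) = int (M a) - int (M b)"
proof -
  obtain c d where cd: "quotient_of (of_int a / of_int b) = (c, d)" by (cases "quotient_of (of_int a / of_int b)")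
  have d0: "d > 0" using cd quotient_of_denom_pos by blast
  have eq: "(of_int a / of_int b :: rat) = of_int c / of_int d" using cd quotient_of_div by blast
  have c0: "c \<noteq> 0" using eq assms d0 by auto
  have "a * d = c * b" using eq assms d0 by (simp add: frac_eq_eq) (metis of_int_eq_iff of_int_mult)
  hence "M a + M d = M c + M b" using assms c0 d0 by (metis Mmult less_irrefl)
  thus ?thesis unfolding v2_def cd by simp
qed

lemma v2_int: "a \<noteq> 0 \<Longrightarrow> v2 (of_int a) = int (M a)"
  using v2_frac[of a 1] by simp

lemma v2_mult:
  assumes "x \<noteq> 0" "y \<noteq> 0" shows "v2 (x*y) = v2 x + v2 y"
proof -
  obtain a b where ab: "b > 0" "x = of_int a / of_int b" using rat_repr by blast
  obtain c d where cd: "d > 0" "y = of_int c / of_int d" using rat_repr by blast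
  have a0: "a \<noteq> 0" "c \<noteq> 0" using assms ab cd by auto
  have "x * y = of_int (a*c) / of_int (b*d)" using ab cd by simp
  hence "v2 (x*y) = int (M (a*c)) - int (M (b*d))" using a0 ab cd v2_frac[of "a*c" "b*d"] by simp
  thus ?thesis using ab cd a0 by (simp add: v2_frac Mmult)
qed

lemma v2_inverse:
  assumes "x \<noteq> 0" shows "v2 (inverse x) = - v2 x"
proof -
  have "v2 (inverse x) + v2 x = 0" using v2_mult[of "inverse x" x] assms
    by (simp add: v2_int[of 1, simplified])
  thus ?thesis by simp
qed

lemma v2_div:
  assumes "x \<noteq> 0" "y \<noteq> 0" shows "v2 (x/y) = v2 x - v2 y"
  using assms by (simp add: divide_inverse v2_mult v2_inverse)

lemma v2_ultra:
  assumes "x \<noteq> 0" "y \<noteq> 0" "v2 x < v2 y"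
  shows "x + y \<noteq> 0 \<and> v2 (x+y) = v2 x"
proof -
  obtain a b where ab: "b > 0" "x = of_int a / of_int b" using rat_repr by blast
  obtain c d where cd: "d > 0" "y = of_int c / of_int d" using rat_repr by blast
  have a0: "a \<noteq> 0" "c \<noteq> 0" using assms ab cd by auto
  have vx: "v2 x = int (M (a*d)) - int (M (b*d))" using ab cd a0 by (simp add: v2_frac Mmult)
  have vy: "v2 y = int (M (c*b)) - int (M (b*d))" using ab cd a0 by (simp add: v2_frac Mmult)
  have "M (a*d) < M (c*b)" using vx vy assms(3) by simp
  then have u: "a*d + c*b \<noteq> 0 \<and> M (a*d + c*b) = M (a*d)" using Mult_ultra a0 cd ab by simp
  have e: "x + y = of_int (a*d + c*b) / of_int (b*d)" using ab cd by (simp add: field_simps)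
  have nz: "(of_int (a*d + c*b) :: rat) \<noteq> 0" "(of_int (b*d) :: rat) \<noteq> 0" using u ab cd by (simp only: of_int_eq_0_iff, simp)+
  have "x + y \<noteq> 0" unfolding e using nz by (simp only: divide_eq_0_iff) simp
  moreover have "v2 (x + y) = v2 x" unfolding e using u vx ab cd v2_frac[of "a*d + c*b" "b*d"] by simp
  ultimately show ?thesis by simp
qed


lemma v2_uminus: "v2 (- x) = v2 x"
proof (cases "x = 0")
  case False
  have "v2 (- x) = v2 (of_int (-1) * x)" by simp
  also have "\<dots> = v2 x" using False v2_int[of "-1"] by (subst v2_mult) simp_all
  finally show ?thesis .
qed simp

lemma v2_nat: "n > 0 \<Longrightarrow> v2 (of_nat n) = int (M (int n))"
  using v2_int[of "int n"] by simp

lemma v2_pow2: "v2 (2 ^ k) = int k"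
  using v2_int[of "2 ^ k"] by (simp add: multiplicity_same_power)

lemma M_lt: "M (int (Suc n)) < Suc n"
proof -
  have "2 ^ M (int (Suc n)) dvd int (Suc n)" by (rule multiplicity_dvd)
  hence "(2::int) ^ M (int (Suc n)) \<le> int (Suc n)" by (rule zdvd_imp_le) simp
  moreover have "M (int (Suc n)) < 2 ^ M (int (Suc n))" by (rule less_exp)
  ultimately show ?thesis
    by (metis (mono_tags, opaque_lifting) nat_int of_nat_less_iff of_nat_numeral of_nat_power order_less_le_trans)
qed

definition S :: "int \<Rightarrow> nat \<Rightarrow> rat" where
  "S p n = (\<Sum>i = 0..n. of_nat (n choose i) / (of_int p + of_nat i))"

lemma S_rec:
  assumes "p \<ge> 1"
  shows "of_int p * S p (Suc n) + of_nat (Suc n) * S (p+1) n = 2 ^ Suc n"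
proof -
  have nz: "\<And>i. (of_int p + of_nat i :: rat) \<noteq> 0"
  proof -
    fix i
    have "(of_int p + of_nat i :: rat) = of_int (p + int i)" by simp
    moreover have "p + int i > 0" using assms by simp
    ultimately show "(of_int p + of_nat i :: rat) \<noteq> 0" by (metis of_int_eq_0_iff less_irrefl)
  qed
  have "of_nat (Suc n) * S (p+1) n
      = (\<Sum>i = 0..n. of_nat (Suc n choose Suc i) * of_nat (Suc i) / (of_int p + of_nat (Suc i)))"
    unfolding S_def sum_distrib_left
  proof (rule sum.cong[OF refl])
    fix i
    have "of_nat (Suc n) * of_nat (n choose i) = (of_nat (Suc n choose Suc i) * of_nat (Suc i) :: rat)"
      by (metis Suc_times_binomial_eq of_nat_mult)
    thus "of_nat (Suc n) * (of_nat (n choose i) / (of_int (p + 1) + of_nat i)) =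
         (of_nat (Suc n choose Suc i) * of_nat (Suc i) / (of_int p + of_nat (Suc i)) :: rat)"
      by (simp add: algebra_simps)
  qed
  also have "\<dots> = (\<Sum>i = Suc 0..Suc n. of_nat (Suc n choose i) * of_nat i / (of_int p + of_nat i))"
    by (rule sum.shift_bounds_cl_Suc_ivl[symmetric])
  also have "\<dots> = (\<Sum>i = 0..Suc n. of_nat (Suc n choose i) * of_nat i / (of_int p + of_nat i))"
    by (simp add: sum.atLeast_Suc_atMost)
  finally have A: "of_nat (Suc n) * S (p+1) n = \<dots>" .
  have B: "of_int p * S p (Suc n) = (\<Sum>i = 0..Suc n. of_nat (Suc n choose i) * of_int p / (of_int p + of_nat i))"
    unfolding S_def sum_distrib_left by (simp add: algebra_simps)
  have "of_int p * S p (Suc n) + of_nat (Suc n) * S (p+1) n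
     = (\<Sum>i = 0..Suc n. of_nat (Suc n choose i) * (of_int p + of_nat i) / (of_int p + of_nat i))"
    unfolding A B sum.distrib[symmetric] by (rule sum.cong) (simp_all add: add_divide_distrib algebra_simps)
  also have "\<dots> = (\<Sum>i = 0..Suc n. of_nat (Suc n choose i))" using nz by simp
  also have "\<dots> = of_nat (\<Sum>i \<le> Suc n. (Suc n choose i))" by (simp add: atLeast0AtMost)
  also have "\<dots> = 2 ^ Suc n" by (simp only: choose_row_sum) simp
  finally show ?thesis .
qed

lemma binom_id: "(P + Suc n choose Suc n) * Suc n = (P + 1) * (P + Suc n choose n)"
  using binomial_absorption[of n "P + Suc n"] binomial_absorb_comp[of "P + Suc n" n]
  by (simp add: mult.commute)

lemma S_val:
  assumes "p \<ge> 1"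
  shows "S p n \<noteq> 0 \<and> v2 (S p n) = - int (M (p * int (nat p + n choose n)))"
  using assms
proof (induction n arbitrary: p)
  case 0
  then show ?case using v2_frac[of 1 p] by (simp add: S_def)
next
  case (Suc n)
  have p0: "p \<noteq> 0" using Suc.prems by simp
  have IH: "S (p+1) n \<noteq> 0" "v2 (S (p+1) n) = - int (M ((p+1) * int (nat (p+1) + n choose n)))"
    using Suc.IH[of "p+1"] Suc.prems by auto
  define y where "y = - (of_nat (Suc n) * S (p+1) n)"
  have y0: "y \<noteq> 0" using IH by (simp add: y_def)
  have vy: "v2 y = int (M (int (Suc n))) - int (M ((p+1) * int (nat (p+1) + n choose n)))"
    unfolding y_def v2_uminus using IH by (simp add: v2_mult v2_nat del: of_nat_Suc)
  have "v2 y < v2 (2 ^ Suc n)" unfolding vy v2_pow2 using M_lt[of n] by linarith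
  from v2_ultra[OF y0 _ this] have U: "y + 2 ^ Suc n \<noteq> 0" "v2 (y + 2 ^ Suc n) = v2 y" by simp_all
  have Seq: "S p (Suc n) = (y + 2 ^ Suc n) / of_int p"
    using S_rec[OF Suc.prems, of n] p0 unfolding y_def by (simp add: field_simps)
  have nzS: "S p (Suc n) \<noteq> 0" using Seq U p0 by simp
  have vS: "v2 (S p (Suc n)) = v2 y - int (M p)" unfolding Seq using U p0 by (simp add: v2_div v2_int)
  have C0: "(nat p + Suc n choose Suc n) > 0" "(nat p + 1 + n choose n) > 0" by simp_all
  have "int (nat p + Suc n choose Suc n) * int (Suc n) = (p + 1) * int (nat p + 1 + n choose n)"
  proof -
    have "int (nat p + Suc n choose Suc n) * int (Suc n) = int (nat p + 1) * int (nat p + 1 + n choose n)"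
      using binom_id[of "nat p" n] by (metis of_nat_mult add_Suc_right add_Suc Suc_eq_plus1)
    thus ?thesis using Suc.prems by simp
  qed
  hence "p * int (nat p + Suc n choose Suc n) * int (Suc n) = p * ((p + 1) * int (nat (p+1) + n choose n))"
    using Suc.prems by (simp add: nat_add_distrib)
  hence E: "M (p * int (nat p + Suc n choose Suc n) * int (Suc n)) = M (p * ((p + 1) * int (nat (p+1) + n choose n)))"
    by (rule arg_cong)
  have nz1: "p * int (nat p + Suc n choose Suc n) \<noteq> 0" "int (Suc n) \<noteq> 0"
    "(p + 1) * int (nat (p+1) + n choose n) \<noteq> 0"
    using p0 Suc.prems by (simp_all del: binomial_Suc_Suc of_nat_Suc)
  have "M (p * int (nat p + Suc n choose Suc n)) + M (int (Suc n)) = M p + M ((p + 1) * int (nat (p+1) + n choose n))"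
    using E by (simp only: Mmult[OF nz1(1) nz1(2)] Mmult[OF p0 nz1(3)])
  then show ?case using nzS vS vy by simp
qed


lemma Mn_mult: "a > 0 \<Longrightarrow> b > 0 \<Longrightarrow> M (int (a * b)) = M (int a) + M (int b)"
  by (simp add: Mmult)

lemma F_Suc: "M (int (fact (Suc a))) = M (int (Suc a)) + M (int (fact a))"
proof -
  have "fact (Suc a) = Suc a * (fact a :: nat)" by simp
  thus ?thesis by (metis Mn_mult fact_gt_zero zero_less_Suc)
qed

theorem mainTheorem12:
  fixes p q u :: int
  assumes "p \<ge> 1" and "q \<ge> 0"
    and "p \<le> u" and "u \<le> p + q"
    and "\<forall>w. p \<le> w \<and> w \<le> p + q \<and> w \<noteq> u \<longrightarrow>
               v2 (of_int w) < v2 (of_int u)"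
  shows "v2 (\<Sum>i = 0..nat q. of_nat (nat q choose i) / (of_int p + of_nat i))
         = v2 (of_nat (nat q choose nat (u - p)) / of_int u)"
proof -
  define P where "P = nat p"
  define n where "n = nat q"
  define k where "k = nat (u - p)"
  define U where "U = nat u"
  have pP: "p = int P" using assms P_def by simp
  have qn: "q = int n" using assms n_def by simp
  have uU: "u = int U" using assms U_def by simp
  have UPk: "U = P + k" using assms P_def k_def U_def by simp
  have kn: "k \<le> n" using assms k_def n_def by simp
  have P1: "P \<ge> 1" using assms P_def by simp
  have u0: "u \<noteq> 0" using assms by simp
  have Mw: "M w < M u" if "p \<le> w" "w \<le> p + q" "w \<noteq> u" for w
  proof -
    have "v2 (of_int w) < v2 (of_int u)" using assms(5) that by blast
    thus ?thesis using that assms v2_int[of w] v2_int[of u] by simp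
  qed
  have down: "M (int j) = M (u - int j)" if "1 \<le> j" "j \<le> k" for j
  proof -
    have w: "M (u - int j) < M u" using that assms k_def by (intro Mw) auto
    have "u - int j \<noteq> 0" using that assms k_def by simp
    hence h: "M (- (u - int j) + u) = M (- (u - int j))" using Mult_ultra[of "- (u - int j)" u] w
      by (simp only: multiplicity_uminus_right)
    have e: "- (u - int j) + u = int j" by simp
    have f: "M (- (u - int j)) = M (u - int j)" by (rule multiplicity_uminus_right)
    show ?thesis using h unfolding e f .
  qed
  have up: "M (int j) = M (u + int j)" if "1 \<le> j" "j \<le> n - k" for j
  proof -
    have w: "M (u + int j) < M u" using that assms k_def n_def by (intro Mw) auto
    have "u + int j \<noteq> 0" using that assms k_def by simp
    hence "M ((u + int j) + - u) = M (u + int j)" using Mult_ultra[of "u + int j" "- u"] w by simp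
    thus ?thesis by simp
  qed
  have A: "M (int (fact (U - 1))) = M (int (fact (U - 1 - a))) + M (int (fact a))" if "a \<le> k" for a
    using that
  proof (induction a)
    case 0 then show ?case by simp
  next
    case (Suc a)
    have e: "U - 1 - a = Suc (U - 1 - Suc a)" using Suc.prems UPk P1 by simp
    have "M (int (fact (U - 1 - a))) = M (int (U - 1 - a)) + M (int (fact (U - 1 - Suc a)))"
      unfolding e by (rule F_Suc)
    moreover have "M (int (U - 1 - a)) = M (int (Suc a))"
      using down[of "Suc a"] Suc.prems UPk P1 uU by (simp add: of_nat_diff)
    ultimately show ?case using Suc F_Suc[of a] by simp
  qed
  have B: "M (int (fact (U + b))) = M (int (fact U)) + M (int (fact b))" if "b \<le> n - k" for b
    using that
  proof (induction b)
    case 0 then show ?case by simp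
  next
    case (Suc b)
    have "M (int (fact (U + Suc b))) = M (int (U + Suc b)) + M (int (fact (U + b)))"
      using F_Suc[of "U + b"] by simp
    moreover have "M (int (U + Suc b)) = M (int (Suc b))"
    proof -
      have eq: "int (U + Suc b) = u + int (Suc b)" using uU by simp
      have h: "M (int (Suc b)) = M (u + int (Suc b))" using Suc.prems by (intro up) auto
      show ?thesis unfolding eq by (rule h[symmetric])
    qed
    ultimately show ?case using Suc F_Suc[of b] by simp
  qed
  have FU: "M (int (fact U)) = M u + M (int (fact (U - 1)))"
    using F_Suc[of "U - 1"] UPk P1 uU by (simp add: Suc_diff_1 del: of_nat_Suc)
  have tot: "M (int (fact (P + n))) = M u + M (int (fact (P - 1))) + M (int (fact k)) + M (int (fact (n - k)))"
  proof -
    have "P + n = U + (n - k)" using UPk kn by simp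
    hence "M (int (fact (P + n))) = M (int (fact U)) + M (int (fact (n - k)))" using B[of "n-k"] by simp
    moreover have "U - 1 - k = P - 1" using UPk by simp
    ultimately show ?thesis using FU A[of k] by simp
  qed
  define C1 where "C1 = P + n choose n"
  define C2 where "C2 = n choose k"
  have C0: "C1 > 0" "C2 > 0" using kn by (simp_all add: C1_def C2_def)
  have ident: "P * C1 * C2 * (fact k * fact (n - k)) * fact (P - 1) = fact (P + n)"
  proof -
    have i1: "fact k * fact (n - k) * C2 = fact n" using binomial_fact_lemma[OF kn] C2_def by simp
    have i2: "fact n * fact P * C1 = fact (P + n)"
      using binomial_fact_lemma[of n "P + n"] C1_def by (simp add: mult.commute)
    have i3: "P * fact (P - 1) = fact P"
    proof -
      obtain m where "P = Suc m" using P1 by (cases P) auto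
      thus ?thesis by simp
    qed
    have "P * C1 * C2 * (fact k * fact (n - k)) * fact (P - 1) = (fact k * fact (n - k) * C2) * (P * fact (P - 1)) * C1"
      by (simp add: ac_simps)
    also have "\<dots> = fact n * fact P * C1" unfolding i1 i3 ..
    also have "\<dots> = fact (P + n)" by (rule i2)
    finally show ?thesis .
  qed
  have "M (int (P * C1 * C2)) + M (int (fact k)) + M (int (fact (n - k))) + M (int (fact (P - 1))) = M (int (fact (P + n)))"
  proof -
    have "M (int (fact (P + n))) = M (int (P * C1 * C2 * (fact k * fact (n - k)) * fact (P - 1)))"
      by (simp only: ident)
    also have "\<dots> = M (int (P * C1 * C2)) + (M (int (fact k)) + M (int (fact (n - k)))) + M (int (fact (P - 1)))"
    proof -
      have f: "fact k * fact (n - k) > (0::nat)" "fact (P - 1) > (0::nat)" "P * C1 * C2 > 0"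
        using C0 P1 by simp_all
      show ?thesis using Mn_mult[OF mult_pos_pos[OF f(3) f(1)] f(2)] Mn_mult[OF f(3) f(1)]
        Mn_mult[of "fact k" "fact (n - k)"] by simp
    qed
    finally show ?thesis by simp
  qed
  hence key: "M (int (P * C1 * C2)) = M u" using tot by simp
  have key2: "M (p * int C1) + M (int C2) = M u"
    using key C0 P1 pP Mn_mult[of "P * C1" C2] Mn_mult[of P C1] by simp
  have Sv: "v2 (S p n) = - int (M (p * int C1))" using S_val[of p n] assms C1_def P_def by simp
  have Tv: "v2 (of_nat C2 / of_int u) = int (M (int C2)) - int (M u)"
    using v2_frac[of "int C2" u] C0 u0 by simp
  have "v2 (S p n) = v2 (of_nat C2 / of_int u)" using Sv Tv key2 by linarith
  thus ?thesis unfolding S_def C2_def n_def k_def .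
qed

end
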